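(* Let $F$ be a graph of diameter $2$, $n=|V(F)|$, and let $l>n$ be an integer. Then $z_1<z_2<\dots<z_{l-1}<z_l$.
   Context: All graphs are simple, finite, undirected. The $F$-degree of a vertex $v$ in $G$ is the number of subgraphs of $G$ (not necessarily induced) isomorphic to $F$ and containing $v$. $A_{2l-1}$ is the graph with vertex set $\{1,\dots,2l-1\}$ in which distinct $i,j$ are adjacent iff $|i-j|\le l-1$. $z_i$ denotes the $F$-degree of vertex $i$ in $A_{2l-1}$. *)

theory Defs
  imports Main
begin

definition graph :: "'a set \<Rightarrow> 'a set set \<Rightarrow> bool" where
  "graph V E \<longleftrightarrow> finite V \<and> (\<forall>e\<in>E. \<exists>x y. x \<in> V \<and> y \<in> V \<and> x \<noteq> y \<and> e = {x, y})"

fun walk :: "'a set set \<Rightarrow> nat \<Rightarrow> 'a \<Rightarrow> 'a \<Rightarrow> bool" where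
  "walk E 0 u v \<longleftrightarrow> u = v"
| "walk E (Suc k) u v \<longleftrightarrow> (\<exists>w. {u, w} \<in> E \<and> walk E k w v)"

definition connected_graph :: "'a set \<Rightarrow> 'a set set \<Rightarrow> bool" where
  "connected_graph V E \<longleftrightarrow> (\<forall>u\<in>V. \<forall>v\<in>V. \<exists>k. walk E k u v)"

definition gdist :: "'a set set \<Rightarrow> 'a \<Rightarrow> 'a \<Rightarrow> nat" where
  "gdist E u v = (LEAST k. walk E k u v)"

definition diameter2 :: "'a set \<Rightarrow> 'a set set \<Rightarrow> bool" where
  "diameter2 V E \<longleftrightarrow> V \<noteq> {} \<and> connected_graph V E \<and>
     Max {gdist E u v | u v. u \<in> V \<and> v \<in> V} = 2"

definition iso_subgraph ::
  "'b set \<Rightarrow> 'b set set \<Rightarrow> 'a set \<Rightarrow> 'a set set \<Rightarrow> 'a set \<Rightarrow> 'a set set \<Rightarrow> bool" where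
  "iso_subgraph VF EF V E W D \<longleftrightarrow>
     W \<subseteq> V \<and> D \<subseteq> E \<and> (\<forall>e\<in>D. e \<subseteq> W) \<and>
     (\<exists>f. bij_betw f VF W \<and>
          (\<forall>x\<in>VF. \<forall>y\<in>VF. {x, y} \<in> EF \<longleftrightarrow> {f x, f y} \<in> D))"

definition F_degree ::
  "'b set \<Rightarrow> 'b set set \<Rightarrow> 'a set \<Rightarrow> 'a set set \<Rightarrow> 'a \<Rightarrow> nat" where
  "F_degree VF EF V E v = card {(W, D). iso_subgraph VF EF V E W D \<and> v \<in> W}"

definition A_V :: "nat \<Rightarrow> nat set" where
  "A_V l = {1..2*l-1}"

definition A_E :: "nat \<Rightarrow> nat set set" where
  "A_E l = {{i, j} | i j. i \<in> A_V l \<and> j \<in> A_V l \<and> i \<noteq> j \<and>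
                         \<bar>int i - int j\<bar> \<le> int l - 1}"

end

theory Submission
  imports Defs
begin

lemma A_E_iff: "{x,y} \<in> A_E l \<longleftrightarrow> x \<in> A_V l \<and> y \<in> A_V l \<and> x \<noteq> y \<and> \<bar>int x - int y\<bar> \<le> int l - 1"
  unfolding A_E_def by (auto simp: doubleton_eq_iff abs_minus_commute)

lemma A_E_elem: "e \<in> A_E l \<Longrightarrow> \<exists>x y. e = {x,y} \<and> {x,y} \<in> A_E l"
  unfolding A_E_def by blast

lemma finite_A_E: "finite (A_E l)"
proof -
  have "A_E l \<subseteq> Pow (A_V l)" unfolding A_E_def by auto
  then show ?thesis by (rule finite_subset) (simp add: A_V_def)
qed

lemma edge_exists:
  assumes "graph VF EF" "diameter2 VF EF"
  shows "\<exists>a b. {a,b} \<in> EF"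
proof -
  let ?M = "{gdist EF u v | u v. u \<in> VF \<and> v \<in> VF}"
  have fin: "finite VF" using assms(1) by (simp add: graph_def)
  have M: "?M = (\<lambda>(u,v). gdist EF u v) ` (VF \<times> VF)" by auto
  have "finite ?M" unfolding M using fin by simp
  moreover have "?M \<noteq> {}" using assms(2) unfolding diameter2_def by auto
  ultimately have "Max ?M \<in> ?M" by (rule Max_in)
  then have "2 \<in> ?M" using assms(2) unfolding diameter2_def by simp
  then obtain u v where uv: "u \<in> VF" "v \<in> VF" "gdist EF u v = 2" by auto
  have "u \<noteq> v"
  proof
    assume "u = v"
    then have "gdist EF u v = 0" unfolding gdist_def by (intro Least_eq_0) simp
    with uv show False by simp
  qed
  obtain k where "walk EF k u v" using assms(2) uv unfolding diameter2_def connected_graph_def by blast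
  with \<open>u \<noteq> v\<close> show ?thesis by (cases k) auto
qed


lemma step:
  fixes VF :: "'b set" and EF :: "'b set set"
  assumes gr: "graph VF EF" and ab: "{a,b} \<in> EF" and lc: "card VF < l" and i1: "1 \<le> i" and il: "i < l"
  shows "F_degree VF EF (A_V l) (A_E l) i < F_degree VF EF (A_V l) (A_E l) (i + 1)"
proof -
  define V where "V = A_V l"
  define E where "E = A_E l"
  define S where "S = (\<lambda>v. {(W, D). iso_subgraph VF EF V E W D \<and> v \<in> W})"
  define s where "s = (\<lambda>x::nat. if x = i then i + 1 else x)"
  define \<Phi> where "\<Phi> = (\<lambda>(W, D). if i + 1 \<in> W then (W, D) else (s ` W, (image s) ` D))"
  have finV: "finite VF" using gr by (simp add: graph_def)
  have aVF: "a \<in> VF" "b \<in> VF" "a \<noteq> b" using gr ab unfolding graph_def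
    by (auto simp: doubleton_eq_iff)
  have edgeVF: "x \<in> VF \<and> y \<in> VF \<and> x \<noteq> y" if "{x,y} \<in> EF" for x y
    using gr that unfolding graph_def by (auto simp: doubleton_eq_iff)
  have cardge: "card VF \<ge> 2"
  proof -
    have "card {a,b} \<le> card VF" using aVF finV by (intro card_mono) auto
    then show ?thesis using aVF by simp
  qed
  have Vi: "i \<in> V" "i + 1 \<in> V" using i1 il unfolding V_def A_V_def by auto
  have finS: "finite (S v)" for v
  proof -
    have "S v \<subseteq> Pow V \<times> Pow E" unfolding S_def iso_subgraph_def by auto
    moreover have "finite (Pow V \<times> Pow E)" unfolding V_def E_def using finite_A_E
      by (simp add: A_V_def)
    ultimately show ?thesis by (rule finite_subset)
  qed
  have sim: "s ` W = s ` W' \<longleftrightarrow> W = W'" if "i + 1 \<notin> W" "i + 1 \<notin> W'" for W W'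
  proof -
    have "inj_on s (W \<union> W')" using that unfolding inj_on_def s_def by auto
    then show ?thesis by (rule inj_on_image_eq_iff) auto
  qed
  have sub: "\<Phi> ` S i \<subseteq> S (i+1)"
  proof
    fix p assume "p \<in> \<Phi> ` S i"
    then obtain W D where WD: "(W, D) \<in> S i" and p: "p = \<Phi> (W, D)" by auto
    show "p \<in> S (i + 1)"
    proof (cases "i + 1 \<in> W")
      case True
      then show ?thesis using WD p unfolding \<Phi>_def S_def by auto
    next
      case False
      then have p': "p = (s ` W, (image s) ` D)" using p unfolding \<Phi>_def by auto
      have iW: "i \<in> W" using WD unfolding S_def by auto
      have iso: "iso_subgraph VF EF V E W D" using WD unfolding S_def by auto
      then obtain f where WV: "W \<subseteq> V" and DE: "D \<subseteq> E" and DW: "\<forall>e\<in>D. e \<subseteq> W"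
        and bf: "bij_betw f VF W" and fe: "\<forall>x\<in>VF. \<forall>y\<in>VF. {x, y} \<in> EF \<longleftrightarrow> {f x, f y} \<in> D"
        unfolding iso_subgraph_def by blast
      have injs: "inj_on s W" using False unfolding inj_on_def s_def by auto
      have "s ` W \<subseteq> V" using WV Vi unfolding s_def by auto
      moreover have "(image s) ` D \<subseteq> E"
      proof
        fix e' assume "e' \<in> (image s) ` D"
        then obtain e where e: "e \<in> D" "e' = s ` e" by auto
        then obtain x y where xy: "e = {x,y}" "{x,y} \<in> E" using DE A_E_elem unfolding E_def by blast
        have xyW: "x \<in> W" "y \<in> W" using DW e xy by auto
        have c: "x \<in> V" "y \<in> V" "x \<noteq> y" "\<bar>int x - int y\<bar> \<le> int l - 1"
          using xy(2) A_E_iff unfolding E_def V_def by auto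
        have "x \<noteq> i + 1" "y \<noteq> i + 1" using xyW False by auto
        moreover have "x \<ge> 1" "y \<ge> 1" using c unfolding V_def A_V_def by auto
        ultimately have xyne: "x \<noteq> i + 1" "y \<noteq> i + 1" "1 \<le> x" "1 \<le> y" by auto
        have sV: "s x \<in> V" "s y \<in> V" using c Vi unfolding s_def by auto
        have sne: "s x \<noteq> s y" using injs xyW c(3) unfolding inj_on_def by blast
        have sab: "\<bar>int (s x) - int (s y)\<bar> \<le> int l - 1"
        proof (cases "x = i")
          case True
          then have "y \<noteq> i" using c(3) by simp
          then show ?thesis using True c(4) xyne il unfolding s_def abs_le_iff by simp
        next
          case False
          show ?thesis
          proof (cases "y = i")
            case True
            then show ?thesis using False c(4) xyne il unfolding s_def abs_le_iff by simp
          next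
            case False2: False
            then show ?thesis using False c(4) unfolding s_def by simp
          qed
        qed
        have "s x \<in> V \<and> s y \<in> V \<and> s x \<noteq> s y \<and> \<bar>int (s x) - int (s y)\<bar> \<le> int l - 1"
          using sV sne sab by blast
        then have "{s x, s y} \<in> E" using A_E_iff unfolding E_def V_def by blast
        then show "e' \<in> E" using e xy by simp
      qed
      moreover have "\<forall>e\<in>(image s) ` D. e \<subseteq> s ` W" using DW by auto
      moreover have "bij_betw (s \<circ> f) VF (s ` W)"
        using bf injs by (metis bij_betw_trans inj_on_imp_bij_betw)
      moreover have "\<forall>x\<in>VF. \<forall>y\<in>VF. {x, y} \<in> EF \<longleftrightarrow> {(s \<circ> f) x, (s \<circ> f) y} \<in> (image s) ` D"
      proof (intro ballI)
        fix x y assume xy: "x \<in> VF" "y \<in> VF"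
        have fW: "{f x, f y} \<subseteq> W" using bf xy by (auto simp: bij_betw_def)
        have "{f x, f y} \<in> D \<longleftrightarrow> s ` {f x, f y} \<in> (image s) ` D"
        proof
          assume "s ` {f x, f y} \<in> (image s) ` D"
          then obtain e where e: "e \<in> D" "s ` e = s ` {f x, f y}" by auto
          have "e \<subseteq> W" using DW e by auto
          from e(2) have "e = {f x, f y}" using inj_on_image_eq_iff[OF injs \<open>e \<subseteq> W\<close> fW] by simp
          then show "{f x, f y} \<in> D" using e by simp
        next
          assume "{f x, f y} \<in> D"
          then show "s ` {f x, f y} \<in> (image s) ` D" by (rule imageI)
        qed
        then show "{x, y} \<in> EF \<longleftrightarrow> {(s \<circ> f) x, (s \<circ> f) y} \<in> (image s) ` D"
          using fe xy by simp
      qed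
      ultimately have "iso_subgraph VF EF V E (s ` W) ((image s) ` D)"
        using WV unfolding iso_subgraph_def by blast
      moreover have "i + 1 \<in> s ` W" using iW unfolding s_def by force
      ultimately show ?thesis using p' unfolding S_def by auto
    qed
  qed
  have noi: "i \<notin> s ` W" for W using il unfolding s_def by auto
  have inj: "inj_on \<Phi> (S i)"
  proof (rule inj_onI)
    fix p q assume pS: "p \<in> S i" and qS: "q \<in> S i" and pq: "\<Phi> p = \<Phi> q"
    obtain W1 D1 where p: "p = (W1, D1)" by (cases p)
    obtain W2 D2 where q: "q = (W2, D2)" by (cases q)
    have i12: "i \<in> W1" "i \<in> W2" using pS qS p q unfolding S_def by auto
    have DW1: "\<forall>e\<in>D1. e \<subseteq> W1" using pS p unfolding S_def iso_subgraph_def by auto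
    have DW2: "\<forall>e\<in>D2. e \<subseteq> W2" using qS q unfolding S_def iso_subgraph_def by auto
    show "p = q"
    proof (cases "i + 1 \<in> W1")
      case T1: True
      show ?thesis
      proof (cases "i + 1 \<in> W2")
        case True
        then show ?thesis using T1 pq p q unfolding \<Phi>_def by simp
      next
        case False
        then have "W1 = s ` W2" using T1 pq p q unfolding \<Phi>_def by simp
        then show ?thesis using i12 noi by blast
      qed
    next
      case F1: False
      show ?thesis
      proof (cases "i + 1 \<in> W2")
        case True
        then have "W2 = s ` W1" using F1 pq p q unfolding \<Phi>_def by simp
        then show ?thesis using i12 noi by blast
      next
        case False
        then have e1: "s ` W1 = s ` W2" and e2: "(image s) ` D1 = (image s) ` D2"
          using F1 pq p q unfolding \<Phi>_def by simp_all
        have W12: "W1 = W2" using e1 sim F1 False by blast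
        have "inj_on s (W1 \<union> W2)" using F1 False unfolding inj_on_def s_def by auto
        then have "inj_on (image s) (Pow (W1 \<union> W2))" by (rule inj_on_image_Pow)
        moreover have "D1 \<subseteq> Pow (W1 \<union> W2)" "D2 \<subseteq> Pow (W1 \<union> W2)" using DW1 DW2 by auto
        ultimately have "D1 = D2" using e2 inj_on_image_eq_iff by metis
        then show ?thesis using W12 p q by simp
      qed
    qed
  qed
  obtain W0 D0 where w0: "(W0, D0) \<in> S (i+1)" "(W0,D0) \<notin> \<Phi> ` S i"
  proof -
    have l3: "l \<ge> 3" using cardge lc by simp
    have "card (VF - {a,b}) = card VF - 2" using aVF finV by (simp add: card_Diff_subset)
    moreover have "card {i+2..i+l-1} = l - 2" using l3 by simp
    ultimately have "card (VF - {a,b}) \<le> card {i+2..i+l-1}" using lc by simp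
    then obtain h where h: "h ` (VF - {a,b}) \<subseteq> {i+2..i+l-1}" "inj_on h (VF - {a,b})"
      using card_le_inj[of "VF - {a,b}" "{i+2..i+l-1}"] finV by auto
    define g where "g = (\<lambda>x. if x = a then i + 1 else if x = b then i + l else h x)"
    have gwin: "g x \<in> {i+1..i+l}" if "x \<in> VF" for x
      using h(1) that l3 unfolding g_def by fastforce
    have ginj: "inj_on g VF"
    proof (rule inj_onI)
      fix x y assume xy: "x \<in> VF" "y \<in> VF" "g x = g y"
      have hx: "h x \<in> {i+2..i+l-1}" if "x \<in> VF" "x \<noteq> a" "x \<noteq> b" for x
        using h(1) that by auto
      show "x = y"
      proof (cases "x = a \<or> x = b \<or> y = a \<or> y = b")
        case True
        then show ?thesis using xy(3) hx[OF xy(1)] hx[OF xy(2)] l3 aVF(3) unfolding g_def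
          by (auto split: if_splits)
      next
        case False
        then have "h x = h y" using xy(3) unfolding g_def by simp
        then show ?thesis using h(2) xy(1,2) False unfolding inj_on_def by blast
      qed
    qed
    define W0 where "W0 = g ` VF"
    define D0 where "D0 = {{g x, g y} | x y. {x,y} \<in> EF}"
    have "W0 \<subseteq> V" using gwin il unfolding W0_def V_def A_V_def by fastforce
    moreover have "D0 \<subseteq> E"
    proof
      fix e assume "e \<in> D0"
      then obtain x y where e: "e = {g x, g y}" "{x,y} \<in> EF" unfolding D0_def by blast
      have xy: "x \<in> VF" "y \<in> VF" "x \<noteq> y" using edgeVF e(2) by auto
      have "g x \<noteq> g y" using ginj xy unfolding inj_on_def by blast
      moreover have "g x \<in> A_V l" "g y \<in> A_V l" using gwin xy il unfolding A_V_def by fastforce+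
      moreover have "\<bar>int (g x) - int (g y)\<bar> \<le> int l - 1"
        using gwin[OF xy(1)] gwin[OF xy(2)] unfolding abs_le_iff by auto
      ultimately show "e \<in> E" using e A_E_iff unfolding E_def by blast
    qed
    moreover have "\<forall>e\<in>D0. e \<subseteq> W0" unfolding D0_def W0_def using edgeVF by blast
    moreover have "bij_betw g VF W0" using ginj unfolding W0_def by (simp add: bij_betw_def)
    moreover have "\<forall>x\<in>VF. \<forall>y\<in>VF. {x, y} \<in> EF \<longleftrightarrow> {g x, g y} \<in> D0"
    proof (intro ballI iffI)
      fix x y assume "x \<in> VF" "y \<in> VF" "{x, y} \<in> EF"
      then show "{g x, g y} \<in> D0" unfolding D0_def by blast
    next
      fix x y assume xy: "x \<in> VF" "y \<in> VF" "{g x, g y} \<in> D0"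
      then obtain x' y' where e: "{g x, g y} = {g x', g y'}" "{x',y'} \<in> EF" unfolding D0_def by blast
      have "x' \<in> VF" "y' \<in> VF" using edgeVF e(2) by auto
      then have "{x, y} = {x', y'}" using e(1) xy ginj unfolding doubleton_eq_iff inj_on_def by metis
      then show "{x, y} \<in> EF" using e(2) by simp
    qed
    ultimately have iso0: "iso_subgraph VF EF V E W0 D0" unfolding iso_subgraph_def by blast
    have in0: "i + 1 \<in> W0" using aVF unfolding W0_def g_def by force
    have ni0: "i \<notin> W0" using gwin unfolding W0_def by fastforce
    have ed0: "{i+1, i+l} \<in> D0" using ab aVF unfolding D0_def g_def by force
    have "(W0, D0) \<in> S (i+1)" using iso0 in0 unfolding S_def by simp
    moreover have "(W0, D0) \<notin> \<Phi> ` S i"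
    proof
      assume "(W0, D0) \<in> \<Phi> ` S i"
      then obtain W D where WD: "(W, D) \<in> S i" and eq: "(W0, D0) = \<Phi> (W, D)" by auto
      have iW: "i \<in> W" using WD unfolding S_def by auto
      show False
      proof (cases "i + 1 \<in> W")
        case True
        then show False using eq iW ni0 unfolding \<Phi>_def by simp
      next
        case False
        then have "D0 = (image s) ` D" using eq unfolding \<Phi>_def by simp
        then obtain e where e: "e \<in> D" "{i+1, i+l} = s ` e" using ed0 by auto
        have DE: "D \<subseteq> E" and DW: "\<forall>e\<in>D. e \<subseteq> W" using WD unfolding S_def iso_subgraph_def by auto
        obtain x y where xy: "e = {x,y}" "{x,y} \<in> E" using DE e A_E_elem unfolding E_def by blast
        have c: "x \<noteq> y" "\<bar>int x - int y\<bar> \<le> int l - 1" using xy(2) A_E_iff unfolding E_def by auto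
        have ne: "x \<noteq> i + 1" "y \<noteq> i + 1" using DW e xy False by auto
        have "{i+1, i+l} = {s x, s y}" using e xy by simp
        then have "(s x = i + 1 \<and> s y = i + l) \<or> (s x = i + l \<and> s y = i + 1)"
          by (auto simp add: doubleton_eq_iff)
        then show False using ne c l3 unfolding s_def abs_le_iff by (auto split: if_splits)
      qed
    qed
    ultimately show ?thesis using that by blast
  qed
  have "\<Phi> ` S i \<subset> S (i+1)" using sub w0 by blast
  then have "card (\<Phi> ` S i) < card (S (i+1))" by (rule psubset_card_mono[OF finS])
  then show ?thesis using card_image[OF inj] unfolding F_degree_def S_def V_def E_def by simp
qed

theorem corollary1:
  fixes VF :: "'b set" and EF :: "'b set set" and l :: nat
  assumes "graph VF EF"
    and "diameter2 VF EF"
    and "l > card VF"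
  shows "\<forall>i\<in>{1..<l}. F_degree VF EF (A_V l) (A_E l) i < F_degree VF EF (A_V l) (A_E l) (i + 1)"
proof
  fix i assume i: "i \<in> {1..<l}"
  obtain a b where "{a,b} \<in> EF" using edge_exists[OF assms(1,2)] by blast
  then show "F_degree VF EF (A_V l) (A_E l) i < F_degree VF EF (A_V l) (A_E l) (i + 1)"
    using step[OF assms(1) _ assms(3)] i by auto
qed

end
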